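(* Let $\alpha\in(0,1)$ and $A\in\Omega^1_{\mathrm{gr}\alpha}$. Then $A$ is a continuous function on $\mathcal X$, and $$\lim_{\varepsilon\to0}\sup_{|\ell|<\varepsilon}|\ell|^{-\alpha}|A(\ell)|=0.$$
   Context: $E$ is a Banach space; $\mathbf T^2=[-\frac12,\frac12)^2$ with geodesic distance; $\mathcal X=\mathbf T^2\times\{v\in\mathbb R^2:|v|\le\frac14\}$ with $\ell=(x,v)$, $\ell_i=x$, $\ell_f=x+v$, $|\ell|=|v|$, metrised by $d(\ell,\bar\ell)=|\ell_i-\bar\ell_i|\vee|\ell_f-\bar\ell_f|$. $\Omega$ is the space of measurable $A:\mathcal X\to E$ additive under concatenation of joinable collinear segments; $|A|_{\mathrm{gr}\alpha}=\sup_{|\ell|>0}|A(\ell)|/|\ell|^\alpha$ and $\Omega_{\mathrm{gr}\alpha}=\{A:|A|_{\mathrm{gr}\alpha}<\infty\}$. For a continuous $E$-valued 1-form $A=A_1dx_1+A_2dx_2$, $\iota A(x,v)=\int_0^1\sum_iA_i(x+tv)v_i\,dt$. $\Omega^1_{\mathrm{gr}\alpha}$ is the closure of $\iota(\text{smooth }E\text{-valued 1-forms})$ in $\Omega_{\mathrm{gr}\alpha}$. *)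

theory Defs
  imports "HOL-Analysis.Analysis"
begin

text \<open>Torus T^2 = [-1/2,1/2)^2 represented inside real^2.\<close>
definition T2 :: "(real^2) set" where
  "T2 = {x. \<forall>i. -1/2 \<le> x$i \<and> x$i < 1/2}"

definition tor_wrap :: "real^2 \<Rightarrow> real^2" where
  "tor_wrap y = (\<chi> i. y$i - of_int \<lfloor>y$i + 1/2\<rfloor>)"

definition tor_dist :: "real^2 \<Rightarrow> real^2 \<Rightarrow> real" where
  "tor_dist x y = Inf {norm (x - y - k) | k::real^2. \<forall>i. k$i \<in> \<int>}"

text \<open>Line segments l = (x,v): l_i = x, l_f = x+v (on the torus), |l| = |v|.\<close>
definition Xsp :: "((real^2) \<times> (real^2)) set" where
  "Xsp = {(x,v). x \<in> T2 \<and> norm v \<le> 1/4}"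

definition seg_i :: "(real^2) \<times> (real^2) \<Rightarrow> real^2" where
  "seg_i l = fst l"

definition seg_f :: "(real^2) \<times> (real^2) \<Rightarrow> real^2" where
  "seg_f l = tor_wrap (fst l + snd l)"

definition seg_len :: "(real^2) \<times> (real^2) \<Rightarrow> real" where
  "seg_len l = norm (snd l)"

definition seg_dist :: "(real^2) \<times> (real^2) \<Rightarrow> (real^2) \<times> (real^2) \<Rightarrow> real" where
  "seg_dist l m = max (tor_dist (seg_i l) (seg_i m)) (tor_dist (seg_f l) (seg_f m))"

definition Omega :: "((real^2) \<times> (real^2) \<Rightarrow> 'e::banach) set" where
  "Omega = {A. A \<in> borel_measurable (restrict_space borel Xsp) \<and>
     (\<forall>x v w. x \<in> T2 \<longrightarrow> norm (v + w) \<le> 1/4 \<longrightarrow>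
        (v = 0 \<or> w = 0 \<or> (\<exists>t>0. w = t *\<^sub>R v)) \<longrightarrow>
        A (x, v + w) = A (x, v) + A (tor_wrap (x + v), w))}"

text \<open>The condition |A|_{gr alpha} \<le> C (i.e. the supremum is at most C).\<close>
definition gr_bounded :: "real \<Rightarrow> real \<Rightarrow> ((real^2) \<times> (real^2) \<Rightarrow> 'e::real_normed_vector) \<Rightarrow> bool" where
  "gr_bounded \<alpha> C A \<longleftrightarrow> (\<forall>l\<in>Xsp. seg_len l > 0 \<longrightarrow> norm (A l) \<le> C * seg_len l powr \<alpha>)"

definition Omega_gr :: "real \<Rightarrow> ((real^2) \<times> (real^2) \<Rightarrow> 'e::banach) set" where
  "Omega_gr \<alpha> = {A. A \<in> Omega \<and> (\<exists>C. gr_bounded \<alpha> C A)}"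

primrec Ck :: "nat \<Rightarrow> (real^2 \<Rightarrow> 'e::real_normed_vector) \<Rightarrow> bool" where
  "Ck 0 f = continuous_on UNIV f"
| "Ck (Suc n) f = (\<exists>f'. (\<forall>x. (f has_derivative f' x) (at x)) \<and> (\<forall>h. Ck n (\<lambda>x. f' x h))
                       \<and> continuous_on UNIV f)"

definition smooth_fun :: "(real^2 \<Rightarrow> 'e::real_normed_vector) \<Rightarrow> bool" where
  "smooth_fun f \<longleftrightarrow> (\<forall>n. Ck n f)"

text \<open>A smooth E-valued 1-form A_1 dx_1 + A_2 dx_2 on the torus: two smooth
  Z^2-periodic coefficient functions on R^2.\<close>
definition smooth_form :: "(2 \<Rightarrow> real^2 \<Rightarrow> 'e::real_normed_vector) \<Rightarrow> bool" where
  "smooth_form F \<longleftrightarrow> (\<forall>i. smooth_fun (F i) \<and>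
      (\<forall>x k. (\<forall>j. k$j \<in> \<int>) \<longrightarrow> F i (x + k) = F i x))"

definition iota :: "(2 \<Rightarrow> real^2 \<Rightarrow> 'e::banach) \<Rightarrow> (real^2) \<times> (real^2) \<Rightarrow> 'e" where
  "iota F l = integral {0..1} (\<lambda>t. \<Sum>i\<in>UNIV. (snd l $ i) *\<^sub>R F i (fst l + t *\<^sub>R snd l))"

text \<open>Omega^1_{gr alpha}: closure of iota(smooth 1-forms) in Omega_{gr alpha}.\<close>
definition Omega1_gr :: "real \<Rightarrow> ((real^2) \<times> (real^2) \<Rightarrow> 'e::banach) set" where
  "Omega1_gr \<alpha> = {A. A \<in> Omega_gr \<alpha> \<and>
      (\<forall>\<epsilon>>0. \<exists>F. smooth_form F \<and> gr_bounded \<alpha> \<epsilon> (\<lambda>l. A l - iota F l))}"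

definition cont_on_X :: "((real^2) \<times> (real^2) \<Rightarrow> 'e::real_normed_vector) \<Rightarrow> bool" where
  "cont_on_X A \<longleftrightarrow> (\<forall>l\<in>Xsp. \<forall>e>0. \<exists>\<delta>>0. \<forall>m\<in>Xsp. seg_dist l m < \<delta> \<longrightarrow> norm (A m - A l) < e)"

end

theory Submission
  imports Defs
begin

lemma tor_wrap_T2: "x \<in> T2 \<Longrightarrow> tor_wrap x = x"
  unfolding tor_wrap_def T2_def
proof -
  assume a: "x \<in> {x. \<forall>i. - 1 / 2 \<le> x $ i \<and> x $ i < 1 / 2}"
  have "\<lfloor>x$i + 1/2\<rfloor> = 0" for i
  proof -
    have "-1/2 \<le> x$i \<and> x$i < 1/2" using a by simp
    then show ?thesis by (simp add: floor_eq_iff)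
  qed
  then show "(\<chi> i. x $ i - of_int \<lfloor>x $ i + 1 / 2\<rfloor>) = x" by (simp add: vec_eq_iff)
qed

lemma A_zero:
  assumes "A \<in> Omega" "x \<in> T2" shows "A (x, 0) = 0"
proof -
  have H: "\<forall>x v w. x \<in> T2 \<longrightarrow> norm (v + w) \<le> 1/4 \<longrightarrow>
        (v = 0 \<or> w = 0 \<or> (\<exists>t>0. w = t *\<^sub>R v)) \<longrightarrow>
        A (x, v + w) = A (x, v) + A (tor_wrap (x + v), w)"
    using assms(1) unfolding Omega_def by blast
  have "A (x, 0 + 0) = A (x, 0) + A (tor_wrap (x + 0), 0)"
    using H[rule_format, of x 0 0] assms(2) by simp
  then show ?thesis using tor_wrap_T2[OF assms(2)] by simp
qed

lemma iota_zero: "iota F (x, 0) = 0"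
  unfolding iota_def by simp

lemma smooth_form_cont: "smooth_form F \<Longrightarrow> continuous_on UNIV (F i)"
  unfolding smooth_form_def smooth_fun_def by (metis Ck.simps(1))

lemma smooth_form_per: "smooth_form F \<Longrightarrow> \<forall>j. k$j \<in> \<int> \<Longrightarrow> F i (x + k) = F i x"
  unfolding smooth_form_def by blast

lemma F_bounded:
  assumes "smooth_form F" shows "\<exists>M>0. \<forall>i x. norm (F i x) \<le> M"
proof -
  let ?g = "\<lambda>y. \<Sum>i\<in>UNIV. norm (F i y)"
  have "continuous_on UNIV ?g"
    by (intro continuous_intros continuous_on_norm smooth_form_cont[OF assms])
  then have "compact (?g ` cbox 0 1)"
    by (meson compact_cbox compact_continuous_image continuous_on_subset subset_UNIV)
  then have "bounded (?g ` cbox 0 1)" by (rule compact_imp_bounded)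
  then obtain M where M0: "M > 0" and MM: "\<forall>z\<in>?g ` cbox 0 1. norm z \<le> M"
    unfolding bounded_pos by blast
  have M: "M > 0" "\<And>y. y \<in> cbox 0 1 \<Longrightarrow> norm (?g y) \<le> M" using M0 MM by auto
  have "norm (F i x) \<le> M" for i x
  proof -
    define k where "k = ((\<chi> j. of_int \<lfloor>x$j\<rfloor>) :: real^2)"
    have kint: "\<forall>j. k$j \<in> \<int>" unfolding k_def by simp
    have "0 \<le> x$j - of_int \<lfloor>x$j\<rfloor> \<and> x$j - of_int \<lfloor>x$j\<rfloor> \<le> 1" for j
      using of_int_floor_le[of "x$j"] real_of_int_floor_add_one_gt[of "x$j"] by linarith
    then have "x - k \<in> cbox 0 1" unfolding k_def mem_box_cart by simp
    then have "norm (?g (x - k)) \<le> M" by (rule M(2))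
    moreover have "norm (F i (x - k)) \<le> ?g (x - k)"
      by (rule member_le_sum) auto
    moreover have "F i x = F i (x - k)"
      using smooth_form_per[OF assms kint, of i "x - k"] by simp
    ultimately show ?thesis by simp
  qed
  then show ?thesis using M(1) by blast
qed

lemma sum2_bound:
  fixes f :: "2 \<Rightarrow> real"
  assumes "\<And>i. f i \<le> B" shows "(\<Sum>i\<in>UNIV. f i) \<le> 2 * B"
proof -
  have "(\<Sum>i\<in>UNIV. f i) \<le> of_nat (card (UNIV::2 set)) * B"
    by (rule sum_bounded_above) (use assms in auto)
  then show ?thesis by simp
qed

lemma iota_cont_integrand:
  assumes "smooth_form F"
  shows "continuous_on S (\<lambda>t::real. \<Sum>i\<in>UNIV. (v $ i) *\<^sub>R F i (x + t *\<^sub>R v))"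
proof -
  have c: "continuous_on UNIV (F i)" for i by (rule smooth_form_cont[OF assms])
  show ?thesis
    by (intro continuous_intros continuous_on_compose2[OF c]) auto
qed

lemma iota_bound:
  assumes "smooth_form F" "\<forall>i x. norm (F i x) \<le> M"
  shows "norm (iota F l) \<le> 2 * M * norm (snd l)"
proof -
  obtain x v where l: "l = (x, v)" by force
  have "norm (integral {0..1} (\<lambda>t::real. \<Sum>i\<in>UNIV. (v $ i) *\<^sub>R F i (x + t *\<^sub>R v)))
        \<le> (2 * M * norm v) * (1 - 0)"
  proof (rule integral_bound)
    show "continuous_on {0..1} (\<lambda>t::real. \<Sum>i\<in>UNIV. (v $ i) *\<^sub>R F i (x + t *\<^sub>R v))"
      by (rule iota_cont_integrand[OF assms(1)])
    fix t :: real
    have "norm (\<Sum>i\<in>UNIV. (v $ i) *\<^sub>R F i (x + t *\<^sub>R v)) \<le> (\<Sum>i\<in>UNIV. norm ((v $ i) *\<^sub>R F i (x + t *\<^sub>R v)))"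
      by (rule norm_sum)
    also have "\<dots> \<le> 2 * (norm v * M)"
    proof (rule sum2_bound)
      fix i
      have "norm ((v $ i) *\<^sub>R F i (x + t *\<^sub>R v)) = \<bar>v$i\<bar> * norm (F i (x + t *\<^sub>R v))" by simp
      also have "\<dots> \<le> norm v * M"
        by (rule mult_mono) (use assms(2) component_le_norm_cart in auto)
      finally show "norm ((v $ i) *\<^sub>R F i (x + t *\<^sub>R v)) \<le> norm v * M" .
    qed
    finally show "norm (\<Sum>i\<in>UNIV. (v $ i) *\<^sub>R F i (x + t *\<^sub>R v)) \<le> 2 * M * norm v" by (simp add: algebra_simps)
  qed simp
  then show ?thesis unfolding l iota_def by simp
qed

lemma approx_unif:
  assumes "A \<in> Omega" "gr_bounded \<alpha> \<epsilon> (\<lambda>l. A l - iota F l)" "\<epsilon> \<ge> 0" "\<alpha> > 0" "l \<in> Xsp"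
  shows "norm (A l - iota F l) \<le> \<epsilon>"
proof -
  obtain x v where l: "l = (x, v)" by force
  have x: "x \<in> T2" and v: "norm v \<le> 1/4" using assms(5) unfolding l Xsp_def by auto
  show ?thesis
  proof (cases "v = 0")
    case True
    then show ?thesis using A_zero[OF assms(1) x] iota_zero[of F x] assms(3) l by simp
  next
    case False
    then have "norm (A l - iota F l) \<le> \<epsilon> * seg_len l powr \<alpha>"
      using assms(2,5) unfolding gr_bounded_def seg_len_def l by auto
    also have "\<dots> \<le> \<epsilon> * 1"
      by (rule mult_left_mono) (use v assms(3,4) in \<open>auto simp: seg_len_def l intro!: powr_le1\<close>)
    finally show ?thesis by simp
  qed
qed

lemma tor_dist_lt:
  assumes "tor_dist a b < d"
  shows "\<exists>k. (\<forall>i. k$i \<in> \<int>) \<and> norm (a - b - k) < d"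
proof -
  have "norm (a - b - 0) \<in> {norm (a - b - k) | k::real^2. \<forall>i. k$i \<in> \<int>}"
    by (intro CollectI exI[of _ 0]) simp
  then have ne: "{norm (a - b - k) | k::real^2. \<forall>i. k$i \<in> \<int>} \<noteq> {}"
    by (metis empty_iff)
  from cInf_lessD[OF ne] assms show ?thesis unfolding tor_dist_def by blast
qed

lemma tor_wrap_int: "\<exists>k. (\<forall>i. k$i \<in> \<int>) \<and> tor_wrap y = y - k"
  by (rule exI[of _ "\<chi> i. of_int \<lfloor>y$i + 1/2\<rfloor>"]) (auto simp: tor_wrap_def vec_eq_iff)

lemma int_vec_norm:
  fixes K :: "real^2"
  assumes "\<forall>i. K$i \<in> \<int>" "K \<noteq> 0" shows "norm K \<ge> 1"
proof -
  obtain i where "K$i \<noteq> 0" using assms(2) by (metis vec_eq_iff zero_index)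
  moreover obtain n where "K$i = of_int n" using assms(1) Ints_cases by metis
  ultimately have "\<bar>K$i\<bar> \<ge> 1" by simp
  then show ?thesis using component_le_norm_cart[of K i] by linarith
qed

lemma T2_norm: "x \<in> T2 \<Longrightarrow> norm x \<le> 1"
proof -
  assume x: "x \<in> T2"
  have "\<bar>x$i\<bar> \<le> 1/2" for i
  proof -
    have "-1/2 \<le> x$i \<and> x$i < 1/2" using x unfolding T2_def by simp
    then show ?thesis by linarith
  qed
  then have "(\<Sum>i\<in>UNIV. \<bar>x$i\<bar>) \<le> 2 * (1/2)" by (intro sum2_bound) auto
  then show ?thesis using norm_le_l1_cart[of x] by simp
qed

lemma iota_shift:
  assumes "smooth_form F" "\<forall>j. k$j \<in> \<int>"
  shows "iota F (y + k, w) = iota F (y, w)"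
proof -
  have "F i (y + k + t *\<^sub>R w) = F i (y + t *\<^sub>R w)" for i t
    using smooth_form_per[OF assms, of i "y + t *\<^sub>R w"] by (simp add: algebra_simps)
  then show ?thesis unfolding iota_def by simp
qed

lemma iota_cont:
  assumes sf: "smooth_form F" shows "cont_on_X (iota F)"
  unfolding cont_on_X_def
proof (intro ballI allI impI)
  fix l e assume lX: "l \<in> Xsp" and e: "(e::real) > 0"
  obtain x v where l: "l = (x, v)" by force
  have x: "x \<in> T2" and v: "norm v \<le> 1/4" using lX unfolding l Xsp_def by auto
  obtain M where M0: "M > 0" and M: "\<forall>i x. norm (F i x) \<le> M" using F_bounded[OF sf] by blast
  have "\<exists>\<eta>>0. \<forall>a\<in>cball 0 2. \<forall>b\<in>cball 0 2. dist b a < \<eta> \<longrightarrow> dist (F i b) (F i a) < e/2" for i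
  proof -
    have "uniformly_continuous_on (cball 0 2) (F i)"
      by (rule compact_uniformly_continuous[OF continuous_on_subset[OF smooth_form_cont[OF sf]] compact_cball]) simp
    moreover have "e/2 > 0" using e by simp
    ultimately show ?thesis unfolding uniformly_continuous_on_def by blast
  qed
  then have "\<forall>i. \<exists>\<eta>. \<eta> > 0 \<and> (\<forall>a\<in>cball 0 2. \<forall>b\<in>cball 0 2. dist b a < \<eta> \<longrightarrow> dist (F i b) (F i a) < e/2)"
    by blast
  from choice[OF this] obtain \<eta>f where \<eta>fc: "\<forall>i. \<eta>f i > 0 \<and> (\<forall>a\<in>cball 0 2. \<forall>b\<in>cball 0 2. dist b a < \<eta>f i \<longrightarrow> dist (F i b) (F i a) < e/2)"
    by blast
  have \<eta>f: "\<And>i. \<eta>f i > 0"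
    "\<And>i. \<forall>a\<in>cball 0 2. \<forall>b\<in>cball 0 2. dist b a < \<eta>f i \<longrightarrow> dist (F i b) (F i a) < e/2"
    using \<eta>fc by auto
  define \<eta> where "\<eta> = Min (range \<eta>f)"
  have \<eta>0: "\<eta> > 0" unfolding \<eta>_def using \<eta>f(1) by (subst Min_gr_iff) auto
  have \<eta>le: "\<eta> \<le> \<eta>f i" for i unfolding \<eta>_def by (rule Min_le) auto
  define \<delta> where "\<delta> = min (1/4) (min (\<eta>/3) (e/(16*M)))"
  have \<delta>0: "\<delta> > 0" unfolding \<delta>_def using \<eta>0 e M0 by auto
  show "\<exists>\<delta>>0. \<forall>m\<in>Xsp. seg_dist l m < \<delta> \<longrightarrow> norm (iota F m - iota F l) < e"
  proof (intro exI[of _ \<delta>] conjI ballI impI \<delta>0)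
    fix m assume mX: "m \<in> Xsp" and sd: "seg_dist l m < \<delta>"
    obtain y w where m: "m = (y, w)" by force
    have y: "y \<in> T2" and w: "norm w \<le> 1/4" using mX unfolding m Xsp_def by auto
    have d1: "tor_dist x y < \<delta>" and d2: "tor_dist (tor_wrap (x + v)) (tor_wrap (y + w)) < \<delta>"
      using sd unfolding seg_dist_def seg_i_def seg_f_def l m by auto
    obtain k1 where k1: "\<forall>i. k1$i \<in> \<int>" "norm (x - y - k1) < \<delta>" using tor_dist_lt[OF d1] by blast
    obtain k2 where k2: "\<forall>i. k2$i \<in> \<int>" "norm (tor_wrap (x + v) - tor_wrap (y + w) - k2) < \<delta>"
      using tor_dist_lt[OF d2] by blast
    obtain kx where kx: "\<forall>i. kx$i \<in> \<int>" "tor_wrap (x + v) = x + v - kx" using tor_wrap_int by blast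
    obtain ky where ky: "\<forall>i. ky$i \<in> \<int>" "tor_wrap (y + w) = y + w - ky" using tor_wrap_int by blast
    define K where "K = k1 - kx + ky - k2"
    have Kint: "\<forall>i. K$i \<in> \<int>" unfolding K_def using k1 k2 kx ky by simp
    have eqK: "v - w + K = (tor_wrap (x + v) - tor_wrap (y + w) - k2) - (x - y - k1)"
      unfolding K_def kx ky by (simp add: algebra_simps)
    have nK: "norm (v - w + K) < 2 * \<delta>"
      using eqK norm_triangle_ineq4[of "tor_wrap (x + v) - tor_wrap (y + w) - k2" "x - y - k1"] k1 k2 by simp
    have K0: "K = 0"
    proof (rule ccontr)
      assume "K \<noteq> 0"
      then have "norm K \<ge> 1" using int_vec_norm Kint by blast
      moreover have "norm (v - w) \<le> 1/2" using norm_triangle_ineq4[of v w] v w by simp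
      moreover have "norm K \<le> norm (v - w + K) + norm (v - w)"
        using norm_triangle_ineq4[of "v - w + K" "v - w"] by simp
      moreover have "2 * \<delta> \<le> 1/2" unfolding \<delta>_def by simp
      ultimately show False using nK by simp
    qed
    have vw: "norm (w - v) < 2 * \<delta>" using nK K0 by (simp add: norm_minus_commute)
    define y' where "y' = y + k1"
    have xy': "norm (y' - x) < \<delta>" using k1(2) unfolding y'_def by (simp add: norm_minus_commute algebra_simps)
    have "iota F m = iota F (y', w)" unfolding m y'_def by (rule iota_shift[OF sf k1(1), symmetric])
    let ?g1 = "\<lambda>t::real. \<Sum>i\<in>UNIV. (w $ i) *\<^sub>R F i (y' + t *\<^sub>R w)"
    let ?g2 = "\<lambda>t::real. \<Sum>i\<in>UNIV. (v $ i) *\<^sub>R F i (x + t *\<^sub>R v)"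
    have c1: "continuous_on {0..1} ?g1" by (rule iota_cont_integrand[OF sf])
    have c2: "continuous_on {0..1} ?g2" by (rule iota_cont_integrand[OF sf])
    have "iota F (y', w) - iota F (x, v) = integral {0..1} ?g1 - integral {0..1} ?g2"
      unfolding iota_def by simp
    then have "iota F m - iota F l = integral {0..1} ?g1 - integral {0..1} ?g2"
      using \<open>iota F m = iota F (y', w)\<close> l by simp
    also have "\<dots> = integral {0..1} (\<lambda>t. ?g1 t - ?g2 t)"
      by (rule integral_diff[symmetric]) (use c1 c2 integrable_continuous_real in auto)
    finally have eqi: "iota F m - iota F l = integral {0..1} (\<lambda>t. ?g1 t - ?g2 t)" .
    have "norm (integral {0..1} (\<lambda>t. ?g1 t - ?g2 t)) \<le> (e/2) * (1 - 0)"
    proof (rule integral_bound)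
      show "continuous_on {0..1} (\<lambda>t. ?g1 t - ?g2 t)" using c1 c2 by (rule continuous_on_diff)
      fix t :: real assume t: "t \<in> {0..1}"
      let ?p = "y' + t *\<^sub>R w" and ?q = "x + t *\<^sub>R v"
      have ntv: "norm (t *\<^sub>R v) \<le> 1/4" using t v mult_left_le_one_le[of "norm v" t] by simp
      have ntwv: "norm (t *\<^sub>R (w - v)) \<le> 2 * \<delta>" using t vw mult_left_le_one_le[of "norm (w - v)" t] by simp
      have pq: "?p - ?q = (y' - x) + t *\<^sub>R (w - v)" by (simp add: algebra_simps)
      have "norm ((y' - x) + t *\<^sub>R (w - v)) < 3 * \<delta>"
        using norm_triangle_ineq[of "y' - x" "t *\<^sub>R (w - v)"] xy' ntwv by linarith
      then have npq: "norm (?p - ?q) < 3 * \<delta>" unfolding pq .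
      have nq: "norm ?q \<le> 5/4" using T2_norm[OF x] ntv norm_triangle_ineq[of x "t *\<^sub>R v"] by simp
      have "3 * \<delta> \<le> 3/4" unfolding \<delta>_def by simp
      then have np: "norm ?p \<le> 2" using nq npq norm_triangle_ineq[of "?p - ?q" ?q] by simp
      have dpq: "dist ?p ?q < \<eta>f i" for i
      proof -
        have "3 * \<delta> \<le> \<eta>" unfolding \<delta>_def by simp
        then show ?thesis using npq \<eta>le[of i] by (simp add: dist_norm)
      qed
      have pc: "?p \<in> cball 0 2" using np by simp
      have qc: "?q \<in> cball 0 2" using nq by simp
      have Fi: "norm (F i ?p - F i ?q) < e/2" for i
        using \<eta>f(2)[of i, rule_format, OF qc pc dpq[of i]] by (simp add: dist_norm)
      have geq: "?g1 t - ?g2 t = (\<Sum>i\<in>UNIV. (w$i - v$i) *\<^sub>R F i ?p + v$i *\<^sub>R (F i ?p - F i ?q))"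
        by (simp add: sum_subtractf[symmetric] algebra_simps)
      have "norm (\<Sum>i\<in>UNIV. (w$i - v$i) *\<^sub>R F i ?p + v$i *\<^sub>R (F i ?p - F i ?q)) \<le> (\<Sum>i\<in>UNIV. norm ((w$i - v$i) *\<^sub>R F i ?p + v$i *\<^sub>R (F i ?p - F i ?q)))"
        by (rule norm_sum)
      also have "\<dots> \<le> 2 * (2 * \<delta> * M + 1/4 * (e/2))"
      proof (rule sum2_bound)
        fix i
        have "norm ((w$i - v$i) *\<^sub>R F i ?p + v$i *\<^sub>R (F i ?p - F i ?q))
              \<le> \<bar>w$i - v$i\<bar> * norm (F i ?p) + \<bar>v$i\<bar> * norm (F i ?p - F i ?q)"
          using norm_triangle_ineq[of "(w$i - v$i) *\<^sub>R F i ?p" "v$i *\<^sub>R (F i ?p - F i ?q)"] by simp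
        also have "\<dots> \<le> 2 * \<delta> * M + 1/4 * (e/2)"
        proof (rule add_mono)
          have "\<bar>w$i - v$i\<bar> \<le> 2 * \<delta>" using component_le_norm_cart[of "w - v" i] vw by simp
          then show "\<bar>w$i - v$i\<bar> * norm (F i ?p) \<le> 2 * \<delta> * M"
            using M by (intro mult_mono) auto
          have "\<bar>v$i\<bar> \<le> 1/4" using component_le_norm_cart[of v i] v by simp
          then show "\<bar>v$i\<bar> * norm (F i ?p - F i ?q) \<le> 1/4 * (e/2)"
            using Fi[of i] by (intro mult_mono) auto
        qed
        finally show "norm ((w$i - v$i) *\<^sub>R F i ?p + v$i *\<^sub>R (F i ?p - F i ?q)) \<le> 2 * \<delta> * M + 1/4 * (e/2)" .
      qed
      also have "\<dots> \<le> e/2"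
      proof -
        have "\<delta> \<le> e/(16*M)" unfolding \<delta>_def by simp
        then have "\<delta> * M \<le> e/16" using M0 by (simp add: field_simps)
        then show ?thesis by simp
      qed
      finally show "norm (?g1 t - ?g2 t) \<le> e/2" unfolding geq .
    qed simp
    then show "norm (iota F m - iota F l) < e" using eqi e by simp
  qed
qed

lemma ratio_bound:
  assumes "A \<in> Omega" "smooth_form F" "gr_bounded \<alpha> c (\<lambda>l. A l - iota F l)"
    "\<forall>i x. norm (F i x) \<le> M" "0 < \<alpha>" "\<alpha> < 1"
    "l \<in> Xsp" "0 < seg_len l" "seg_len l \<le> r"
  shows "norm (A l) / seg_len l powr \<alpha> \<le> c + 2 * M * r powr (1 - \<alpha>)"
proof -
  define s where "s = seg_len l"
  have s0: "s > 0" using assms(8) s_def by simp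
  have M0: "M \<ge> 0" using assms(4) norm_ge_zero order_trans by blast
  have sa: "s powr \<alpha> > 0" using s0 by simp
  have b1: "norm (A l - iota F l) \<le> c * s powr \<alpha>" using assms(3,7,8) unfolding gr_bounded_def s_def by blast
  have b2: "norm (iota F l) \<le> 2 * M * s" using iota_bound[OF assms(2,4)] unfolding s_def seg_len_def by simp
  have "norm (A l) \<le> norm (A l - iota F l) + norm (iota F l)"
    using norm_triangle_ineq[of "A l - iota F l" "iota F l"] by simp
  also have "\<dots> \<le> c * s powr \<alpha> + 2 * M * s" using b1 b2 by simp
  finally have "norm (A l) / s powr \<alpha> \<le> (c * s powr \<alpha> + 2 * M * s) / s powr \<alpha>"
    using sa by (simp add: divide_right_mono)
  also have "\<dots> = c + 2 * M * (s / s powr \<alpha>)" using sa by (simp add: field_simps)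
  also have "s / s powr \<alpha> = s powr (1 - \<alpha>)" using s0 by (simp add: powr_diff)
  also have "s powr (1 - \<alpha>) \<le> r powr (1 - \<alpha>)"
    using s0 assms(6,9) s_def by (intro powr_mono2) auto
  finally show ?thesis using M0 by (simp add: mult_left_mono s_def)
qed

theorem proposition3p25:
  fixes \<alpha> :: real and A :: "(real^2) \<times> (real^2) \<Rightarrow> 'e::banach"
  assumes "0 < \<alpha>" and "\<alpha> < 1" and "A \<in> Omega1_gr \<alpha>"
  shows "cont_on_X A \<and>
    ((\<lambda>\<epsilon>. SUP l\<in>{l\<in>Xsp. 0 < seg_len l \<and> seg_len l < \<epsilon>}. norm (A l) / seg_len l powr \<alpha>)
       \<longlongrightarrow> 0) (at_right 0)"
proof
  have AO: "A \<in> Omega" using assms(3) unfolding Omega1_gr_def Omega_gr_def by blast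
  have appr: "\<exists>F. smooth_form F \<and> gr_bounded \<alpha> \<epsilon> (\<lambda>l. A l - iota F l)" if "\<epsilon> > 0" for \<epsilon>
    using assms(3) that unfolding Omega1_gr_def by blast
  show "cont_on_X A"
    unfolding cont_on_X_def
  proof (intro ballI allI impI)
    fix l e assume lX: "l \<in> Xsp" and e: "(e::real) > 0"
    obtain F where F: "smooth_form F" "gr_bounded \<alpha> (e/3) (\<lambda>l. A l - iota F l)"
      using appr[of "e/3"] e by auto
    have U: "norm (A m - iota F m) \<le> e/3" if "m \<in> Xsp" for m
      by (rule approx_unif[OF AO F(2)]) (use e assms(1) that in auto)
    have e3: "e/3 > 0" using e by simp
    obtain \<delta> where \<delta>: "\<delta> > 0" "\<forall>m\<in>Xsp. seg_dist l m < \<delta> \<longrightarrow> norm (iota F m - iota F l) < e/3"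
      using iota_cont[OF F(1), unfolded cont_on_X_def, rule_format, OF lX e3] by blast
    show "\<exists>\<delta>>0. \<forall>m\<in>Xsp. seg_dist l m < \<delta> \<longrightarrow> norm (A m - A l) < e"
    proof (intro exI[of _ \<delta>] conjI ballI impI \<delta>(1))
      fix m assume mX: "m \<in> Xsp" and "seg_dist l m < \<delta>"
      then have a: "norm (iota F m - iota F l) < e/3" using \<delta>(2) by blast
      let ?X = "(A m - iota F m) + (iota F m - iota F l)"
      have eq: "A m - A l = ?X - (A l - iota F l)" by simp
      have n2: "norm (A m - A l) \<le> norm ?X + norm (A l - iota F l)"
        unfolding eq by (rule norm_triangle_ineq4)
      have n1: "norm ?X \<le> norm (A m - iota F m) + norm (iota F m - iota F l)" by (rule norm_triangle_ineq)
      from n1 n2 have "norm (A m - A l) \<le> norm (A m - iota F m) + norm (iota F m - iota F l) + norm (A l - iota F l)"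
        by linarith
      then show "norm (A m - A l) < e" using a U[OF mX] U[OF lX] by simp
    qed
  qed
  show "((\<lambda>\<epsilon>. SUP l\<in>{l\<in>Xsp. 0 < seg_len l \<and> seg_len l < \<epsilon>}. norm (A l) / seg_len l powr \<alpha>)
       \<longlongrightarrow> 0) (at_right 0)"
    unfolding tendsto_iff
  proof (intro allI impI)
    fix e :: real assume e: "e > 0"
    obtain F where F: "smooth_form F" "gr_bounded \<alpha> (e/2) (\<lambda>l. A l - iota F l)"
      using appr[of "e/2"] e by auto
    obtain M where M0: "M > 0" and M: "\<forall>i x. norm (F i x) \<le> M" using F_bounded[OF F(1)] by blast
    define \<epsilon>0 where "\<epsilon>0 = (e/(8*M)) powr (1/(1-\<alpha>))"
    have \<epsilon>00: "\<epsilon>0 > 0" unfolding \<epsilon>0_def using e M0 by simp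
    have \<epsilon>0p: "\<epsilon>0 powr (1 - \<alpha>) = e/(8*M)"
      unfolding \<epsilon>0_def powr_powr using assms(2) e M0 by simp
    show "\<forall>\<^sub>F \<epsilon> in at_right 0. dist (SUP l\<in>{l\<in>Xsp. 0 < seg_len l \<and> seg_len l < \<epsilon>}. norm (A l) / seg_len l powr \<alpha>) 0 < e"
    proof (rule eventually_at_rightI[OF _ \<epsilon>00])
      fix \<epsilon> :: real assume \<epsilon>: "\<epsilon> \<in> {0<..<\<epsilon>0}"
      let ?S = "{l\<in>Xsp. 0 < seg_len l \<and> seg_len l < \<epsilon>}"
      let ?f = "\<lambda>l. norm (A l) / seg_len l powr \<alpha>"
      define c where "c = min (\<epsilon>/2) (1/8)"
      have c0: "c > 0" "c < \<epsilon>" "c \<le> 1/4" unfolding c_def using \<epsilon> by auto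
      have "(0, c *\<^sub>R axis 1 1) \<in> ?S"
        using c0 unfolding Xsp_def T2_def seg_len_def by (simp add: norm_axis_1)
      then have ne: "?S \<noteq> {}" by blast
      have fb: "?f l \<le> 3/4 * e" if "l \<in> ?S" for l
      proof -
        have "?f l \<le> e/2 + 2 * M * \<epsilon>0 powr (1 - \<alpha>)"
          by (rule ratio_bound[OF AO F(1) F(2) M assms(1,2)]) (use that \<epsilon> in auto)
        also have "\<dots> = e/2 + e/4" using \<epsilon>0p M0 by simp
        finally show ?thesis by simp
      qed
      have f0: "?f l \<ge> 0" for l by simp
      have bdd: "bdd_above (?f ` ?S)" using fb by (meson bdd_aboveI2)
      have up: "(SUP l\<in>?S. ?f l) \<le> 3/4 * e" using ne fb by (intro cSUP_least) auto
      obtain l0 where l0: "l0 \<in> ?S" using ne by blast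
      have lo: "(SUP l\<in>?S. ?f l) \<ge> 0" using cSUP_upper[OF l0 bdd] f0[of l0] by linarith
      show "dist (SUP l\<in>?S. ?f l) 0 < e" using up lo e by (simp add: dist_real_def)
    qed
  qed
qed

end
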